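(* Let $P\in\mathbb N$ and let $\{E_i\mid i\in[P]\}$ be a collection of finite sets. There exists a pairwise disjoint collection $\{V_i\mid i\in[P]\}$ such that for all $i\in[P]$, $V_i\subseteq E_i$ and $\#V_i\ge\lfloor\#E_i/P\rfloor$.
   Context: $[P]=\{0,1,\dots,P-1\}$. *)

theory Defs
  imports Main
begin

end

theory Submission
  imports Defs
begin

lemma aux:
  fixes E :: "nat \<Rightarrow> 'a set"
  shows "finite I \<Longrightarrow> card I \<le> P \<Longrightarrow> \<forall>i\<in>I. finite (E i) \<Longrightarrow>
   \<exists>V :: nat \<Rightarrow> 'a set. (\<forall>i\<in>I. \<forall>j\<in>I. i \<noteq> j \<longrightarrow> V i \<inter> V j = {}) \<and>
     (\<forall>i\<in>I. V i \<subseteq> E i \<and> card (V i) = card (E i) div P)"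
proof (induction "card I" arbitrary: I rule: less_induct)
  case less
  show ?case
  proof (cases "I = {}")
    case True then show ?thesis by auto
  next
    case False
    define m where "m = Max ((\<lambda>j. card (E j)) ` I)"
    have "m \<in> (\<lambda>j. card (E j)) ` I" unfolding m_def using less.prems False by simp
    then obtain i where i: "i \<in> I" "card (E i) = m" by auto
    have imax: "\<forall>j\<in>I. card (E j) \<le> card (E i)" using i less.prems unfolding m_def by simp
    define J where "J = I - {i}"
    have cJ: "card J = card I - 1" "finite J" using i less.prems unfolding J_def by auto
    have "card J < card I" using cJ i less.prems False by (simp add: card_gt_0_iff)
    then obtain V where V: "\<forall>a\<in>J. \<forall>b\<in>J. a \<noteq> b \<longrightarrow> V a \<inter> V b = {}"
      "\<forall>a\<in>J. V a \<subseteq> E a \<and> card (V a) = card (E a) div P"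
      using less.hyps[of J] cJ less.prems unfolding J_def by auto
    define U where "U = (\<Union>a\<in>J. V a)"
    define c where "c = card (E i)"
    have fU: "finite U" unfolding U_def using V cJ less.prems J_def
      by (meson DiffD1 finite_UN_I finite_subset)
    have "card U \<le> (\<Sum>a\<in>J. card (V a))" unfolding U_def using card_UN_le cJ(2) by blast
    also have "\<dots> \<le> (\<Sum>a\<in>J. c div P)"
      apply (rule sum_mono) using V imax unfolding J_def c_def by (simp add: div_le_mono)
    also have "\<dots> = (card I - 1) * (c div P)" using cJ by simp
    also have "\<dots> \<le> (P - 1) * (c div P)" using less.prems by (intro mult_le_mono1) simp
    finally have cU: "card U \<le> (P - 1) * (c div P)" .
    have "P * (c div P) \<le> c" by simp
    have "card (E i) - card U \<le> card (E i - U)" by (simp add: diff_card_le_card_Diff fU)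
    moreover have "c div P \<le> c - (P - 1) * (c div P)"
    proof (cases P)
      case 0 then show ?thesis by simp
    next
      case (Suc p)
      have "P * (c div P) = (P - 1) * (c div P) + c div P" using Suc by simp
      then show ?thesis using \<open>P * (c div P) \<le> c\<close> by linarith
    qed
    ultimately have "c div P \<le> card (E i - U)" using cU unfolding c_def by linarith
    then obtain S where S: "S \<subseteq> E i - U" "card S = c div P"
      by (meson obtain_subset_with_card_n)
    define W where "W = V(i := S)"
    have "\<forall>a\<in>I. \<forall>b\<in>I. a \<noteq> b \<longrightarrow> W a \<inter> W b = {}"
      using V S unfolding W_def U_def J_def by auto
    moreover have "\<forall>a\<in>I. W a \<subseteq> E a \<and> card (W a) = card (E a) div P"
      using V S unfolding W_def J_def c_def by auto
    ultimately show ?thesis by blast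
  qed
qed

theorem proposition12:
  fixes P :: nat and E :: "nat \<Rightarrow> 'a set"
  assumes "\<forall>i<P. finite (E i)"
  shows "\<exists>V :: nat \<Rightarrow> 'a set.
           (\<forall>i<P. \<forall>j<P. i \<noteq> j \<longrightarrow> V i \<inter> V j = {}) \<and>
           (\<forall>i<P. V i \<subseteq> E i \<and> card (V i) \<ge> card (E i) div P)"
proof -
  obtain V :: "nat \<Rightarrow> 'a set" where V: "\<forall>i\<in>{..<P}. \<forall>j\<in>{..<P}. i \<noteq> j \<longrightarrow> V i \<inter> V j = {}"
     "\<forall>i\<in>{..<P}. V i \<subseteq> E i \<and> card (V i) = card (E i) div P"
    using aux[of "{..<P}" P E] assms by auto
  then show ?thesis by (intro exI[of _ V]) auto
qed

end
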